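(* Let $N\in\mathbb{N}$ with $N\ge3$, $1\le m\le N+1$ an integer, and $n\in\mathbb{N}$ with $n>\frac{N+5}{96}$. Then there is a real $E$ with $|E|\le E^{[1]}_N n^{-\frac{N+2}{2}}$ such that \[ \lambda(n)^{-2m}=\frac{3^{m/2}}{\pi^m}\left(\sum_{\ell=0}^{R_N(m)}\binom{-\frac m2}{\ell}24^{-\ell}n^{-\ell-\frac m2}+E\right). \]
   Context: $\lambda(n):=\sqrt{\frac{\pi}{6\sqrt2}\sqrt{24n+1}}$; $R_N(m):=\lfloor\frac{N+1-m}{2}\rfloor$; $E^{[1]}_N:=\max_{1\le m\le N+1}\left|\binom{-m/2}{R_N(m)+1}\right|24^{-R_N(m)-1}$. *)

theory Defs
  imports "HOL-Analysis.Analysis"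
begin

definition lam :: "nat \<Rightarrow> real" where
  "lam n = sqrt (pi / (6 * sqrt 2) * sqrt (24 * real n + 1))"

definition RN :: "nat \<Rightarrow> int \<Rightarrow> int" where
  "RN N m = \<lfloor>(real N + 1 - real_of_int m) / 2\<rfloor>"

definition E1 :: "nat \<Rightarrow> real" where
  "E1 N = Max ((\<lambda>m::int. \<bar>(- real_of_int m / 2) gchoose (nat (RN N m + 1))\<bar>
                  * 24 powi (- (RN N m + 1))) ` {1 .. int N + 1})"

end

theory Submission imports Defs begin
lemma binom_taylor:
  fixes a h :: real and K :: nat
  assumes h: "0 < h" and a: "a \<le> 0"
  shows "\<exists>r. \<bar>r\<bar> \<le> \<bar>a gchoose Suc K\<bar> * h ^ Suc K \<and>
     (1 + h) powr a = (\<Sum>l = 0..K. (a gchoose l) * h ^ l) + r"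
proof -
  define diff where "diff k t = (\<Prod>i=0..<k. a - of_nat i) * (1 + t) powr (a - of_nat k)" for k :: nat and t :: real
  have d0: "diff 0 = (\<lambda>t. (1 + t) powr a)" by (simp add: diff_def fun_eq_iff)
  have dS: "\<forall>m t. m < Suc K \<and> 0 \<le> t \<and> t \<le> h \<longrightarrow> DERIV (diff m) t :> diff (Suc m) t"
  proof (intro allI impI)
    fix m :: nat and t :: real assume "m < Suc K \<and> 0 \<le> t \<and> t \<le> h"
    then have t: "0 < 1 + t" by simp
    have "DERIV (\<lambda>t. (1 + t) powr (a - of_nat m)) t :> (a - of_nat m) * (1 + t) powr (a - of_nat m - 1) * 1"
      using t DERIV_chain2[where f="\<lambda>z. z powr (a - of_nat m)" and g="\<lambda>t. 1 + t", OF has_real_derivative_powr[OF t]]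
      by (auto intro!: derivative_eq_intros)
    then have "DERIV (diff m) t :> (\<Prod>i=0..<m. a - of_nat i) * ((a - of_nat m) * (1 + t) powr (a - of_nat m - 1) * 1)"
      unfolding diff_def by (rule DERIV_cmult)
    moreover have "(\<Prod>i=0..<m. a - of_nat i) * ((a - of_nat m) * (1 + t) powr (a - of_nat m - 1) * 1) = diff (Suc m) t"
      by (simp add: diff_def prod.atLeast0_lessThan_Suc algebra_simps)
    ultimately show "DERIV (diff m) t :> diff (Suc m) t" by simp
  qed
  obtain t where t: "0 < t" "t < h"
    and eq: "(1 + h) powr a = (\<Sum>m<Suc K. (diff m 0 / fact m) * h ^ m) + (diff (Suc K) t / fact (Suc K)) * h ^ Suc K"
    using Maclaurin[OF h _ d0 dS] by auto
  have gb: "diff k s / fact k = (a gchoose k) * (1 + s) powr (a - of_nat k)" for k s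
    by (simp add: diff_def gbinomial_prod_rev)
  have sum: "(\<Sum>m<Suc K. (diff m 0 / fact m) * h ^ m) = (\<Sum>l = 0..K. (a gchoose l) * h ^ l)"
    by (simp add: gb atLeast0AtMost lessThan_Suc_atMost)
  define r where "r = (a gchoose Suc K) * (1 + t) powr (a - of_nat (Suc K)) * h ^ Suc K"
  have p: "(1 + t) powr (a - of_nat (Suc K)) \<le> 1"
    using t a by (intro less_imp_le[OF powr_less_one]) auto
  have p0: "0 \<le> (1 + t) powr (a - of_nat (Suc K))" by simp
  have "\<bar>r\<bar> = \<bar>a gchoose Suc K\<bar> * (1 + t) powr (a - of_nat (Suc K)) * h ^ Suc K"
    using h by (simp add: r_def abs_mult)
  also have "\<dots> \<le> \<bar>a gchoose Suc K\<bar> * 1 * h ^ Suc K"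
    using p h by (intro mult_right_mono mult_left_mono) auto
  finally have "\<bar>r\<bar> \<le> \<bar>a gchoose Suc K\<bar> * h ^ Suc K" by simp
  moreover have "(1 + h) powr a = (\<Sum>l = 0..K. (a gchoose l) * h ^ l) + r"
    unfolding eq sum r_def gb[of "Suc K" t, symmetric] by simp
  ultimately show ?thesis by blast
qed
lemma E1_ge:
  fixes N :: nat and m :: int
  assumes "1 \<le> m" "m \<le> int N + 1"
  shows "\<bar>(- real_of_int m / 2) gchoose (nat (RN N m + 1))\<bar> * 24 powi (- (RN N m + 1)) \<le> E1 N"
  unfolding E1_def using assms by (intro Max_ge) auto

theorem lemma3p15:
  fixes N n :: nat and m :: int
  assumes "N \<ge> 3" and "1 \<le> m" and "m \<le> int N + 1"
    and "real n > (real N + 5) / 96"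
  shows "\<exists>E::real. \<bar>E\<bar> \<le> E1 N * real n powr (- (real N + 2) / 2) \<and>
    lam n powi (- 2 * m) =
      3 powr (real_of_int m / 2) / pi powi m *
      ((\<Sum>l = 0..nat (RN N m). ((- real_of_int m / 2) gchoose l) * 24 powi (- int l)
          * real n powr (- real l - real_of_int m / 2)) + E)"
proof -
  have n1: "real n \<ge> 1" using assms(4) by (cases n) auto
  have npos: "real n > 0" using n1 by simp
  define R where "R = nat (RN N m)"
  have RN0: "RN N m \<ge> 0" using assms(3) unfolding RN_def by simp
  have "(real N + 1 - real_of_int m) / 2 < real_of_int (RN N m) + 1"
    unfolding RN_def by linarith
  then have "real_of_int (int N - m) < real_of_int (2 * RN N m + 1)" by simp
  then have RNb: "2 * RN N m \<ge> int N - m" by linarith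
  have RR: "int R = RN N m" using RN0 R_def by simp
  define a where "a = - real_of_int m / 2"
  define h where "h = 1 / (24 * real n)"
  have hpos: "h > 0" using npos h_def by simp
  obtain r where r: "\<bar>r\<bar> \<le> \<bar>a gchoose Suc R\<bar> * h ^ Suc R"
    and req: "(1 + h) powr a = (\<Sum>l = 0..R. (a gchoose l) * h ^ l) + r"
    using binom_taylor[OF hpos, of a R] assms(2) a_def by auto
  define E where "E = real n powr a * r"
  have key: "lam n powi (- 2 * m) = 3 powr (real_of_int m / 2) / pi powi m * (real n powr a * (1 + h) powr a)"
  proof -
  define c where "c = pi / (6 * sqrt 2) * sqrt (24 * real n + 1)"
  have cpos: "c > 0" unfolding c_def by simp
  have lam2: "lam n ^ 2 = c" unfolding lam_def c_def by simp
  have k1: "lam n powi (- 2 * m) = (lam n powi 2) powi (- m)"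
    using power_int_mult[of "lam n" 2 "-m"] by simp
  have k2: "(lam n powi 2) powi (- m) = c powi (- m)" using lam2
    by (metis power_int_of_nat of_nat_numeral)
  have k3: "c powi (- m) = c powr (real_of_int (- m))" using cpos powr_real_of_int'[of c "-m"] by simp
  have k4: "c powr (real_of_int (- m)) = pi powr (real_of_int (- m)) * (6 * sqrt 2) powr (real_of_int m) * sqrt (24 * real n + 1) powr (real_of_int (- m))"
    unfolding c_def powr_mult[of "pi / (6 * sqrt 2)"] powr_divide[of pi "6 * sqrt 2"] of_int_minus powr_minus[of "6 * sqrt 2" "real_of_int m"]
    by (simp only: divide_inverse inverse_inverse_eq)
  have k5: "sqrt (24 * real n + 1) powr (real_of_int (- m)) = (24 * real n + 1) powr a"
    unfolding a_def using powr_half_sqrt[of "24 * real n + 1"] powr_powr[of "24 * real n + 1" "1/2" "real_of_int (- m)"]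
    by simp
  have k6: "(24 * real n + 1) = 24 * (real n * (1 + h))"
    unfolding h_def using npos by (simp add: field_simps)
  have k7: "(24 * (real n * (1 + h))) powr a = 24 powr a * (real n powr a * (1 + h) powr a)"
    by (simp only: powr_mult)
  have k8: "(6 * sqrt 2) = 72 powr (1/2)"
    using powr_half_sqrt[of 72] real_sqrt_mult[of 36 2] by simp
  have k9: "(72 powr (1/2)) powr (real_of_int m) = 3 powr (real_of_int m / 2) * 24 powr (real_of_int m / 2)"
    unfolding powr_powr[of 72 "1/2" "real_of_int m"] powr_mult[of 3 24 "real_of_int m / 2", symmetric]
    by simp
  have k10: "pi powr (real_of_int (- m)) = 1 / pi powi m"
    unfolding of_int_minus powr_minus using powr_real_of_int'[of pi m] by (simp add: divide_inverse)
  have k11: "24 powr (real_of_int m / 2) * 24 powr a = 1" by (simp add: a_def powr_add[symmetric])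
  have "lam n powi (- 2 * m) = pi powr (real_of_int (- m)) * (6 * sqrt 2) powr (real_of_int m) * sqrt (24 * real n + 1) powr (real_of_int (- m))"
    using k1 k2 k3 k4 by simp
  also have "\<dots> = (1 / pi powi m) * (3 powr (real_of_int m / 2) * 24 powr (real_of_int m / 2)) * (24 powr a * (real n powr a * (1 + h) powr a))"
    unfolding k5 k10 k8 k9 unfolding k6 k7 ..
  also have "\<dots> = (1 / pi powi m) * 3 powr (real_of_int m / 2) * (24 powr (real_of_int m / 2) * 24 powr a) * (real n powr a * (1 + h) powr a)"
    by (simp only: mult_ac)
  finally show ?thesis using k11 by simp
  qed
  have sumeq: "real n powr a * (\<Sum>l = 0..R. (a gchoose l) * h ^ l) =
     (\<Sum>l = 0..R. (a gchoose l) * 24 powi (- int l) * real n powr (- real l - real_of_int m / 2))"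
    unfolding sum_distrib_left
  proof (rule sum.cong[OF refl])
    fix l assume "l \<in> {0..R}"
    have hl: "h ^ l = 24 powi (- int l) * real n powr (- real l)"
      unfolding h_def power_int_minus power_int_of_nat powr_minus powr_realpow[OF npos]
      by (simp add: power_one_over power_mult_distrib field_simps)
    have ex: "real n powr (- real l - real_of_int m / 2) = real n powr (- real l) * real n powr a"
      unfolding a_def powr_add[symmetric] by simp
    show "real n powr a * ((a gchoose l) * h ^ l) =
         (a gchoose l) * 24 powi (- int l) * real n powr (- real l - real_of_int m / 2)"
      unfolding hl ex by (simp only: mult_ac)
  qed
  have hk: "h ^ k = 24 powi (- int k) * real n powr (- real k)" for k
      unfolding h_def power_int_minus power_int_of_nat powr_minus powr_realpow[OF npos]
      by (simp add: power_one_over power_mult_distrib field_simps)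
  define g where "g = \<bar>a gchoose Suc R\<bar> * 24 powi (- int (Suc R))"
  have g0: "g \<ge> 0" unfolding g_def by simp
  have gE: "g \<le> E1 N"
  proof -
    have A: "nat (RN N m + 1) = Suc R" using RR by simp
    have B: "- (RN N m + 1) = - int (Suc R)" using RR by simp
    show ?thesis using E1_ge[OF assms(2,3)] unfolding g_def a_def A B .
  qed
  have expo: "a - real (Suc R) \<le> - (real N + 2) / 2"
  proof -
    have "real_of_int (int N - m) \<le> real_of_int (2 * RN N m)" using RNb by linarith
    then have "real N - real_of_int m \<le> 2 * real R" using RR by simp
    then show ?thesis unfolding a_def by simp
  qed
  have "\<bar>E\<bar> = real n powr a * \<bar>r\<bar>" unfolding E_def by (simp add: abs_mult)
  also have "\<dots> \<le> real n powr a * (\<bar>a gchoose Suc R\<bar> * h ^ Suc R)"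
    using r by (intro mult_left_mono) auto
  also have "\<dots> = g * (real n powr (- real (Suc R)) * real n powr a)"
    unfolding hk g_def by (simp only: mult_ac)
  also have "real n powr (- real (Suc R)) * real n powr a = real n powr (a - real (Suc R))"
    by (simp add: powr_add[symmetric] algebra_simps)
  also have "g * \<dots> \<le> E1 N * real n powr (- (real N + 2) / 2)"
    using gE g0 powr_mono[OF expo n1] by (intro mult_mono) auto
  finally have Ebound: "\<bar>E\<bar> \<le> E1 N * real n powr (- (real N + 2) / 2)" .
  show ?thesis
    apply (rule exI[of _ E])
    using Ebound key sumeq req unfolding E_def R_def[symmetric] a_def[symmetric]
    by (simp add: distrib_left)
qed
end
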